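(* Let $\mathcal{C}$ be a robust graph class (not necessarily hereditary) for which $\beta_{\mathcal{C}}$ is finite. For every integer $d\ge1$, $$\beta_{\mathcal{C}}(d)\ge\begin{cases}2^{d-1}+1 & \text{if } \beta_{\mathcal{C}}=1,\\ (\beta_{\mathcal{C}}-1)\,2^{d}+1 & \text{if } \beta_{\mathcal{C}}\ge 2.\end{cases}$$
   Context: $\mathrm{OPT}(G)$ is the minimum vertex cover size. $Y\subseteq V(G)$ is a blocking set of $G$ if no vertex cover of $G$ of size $\mathrm{OPT}(G)$ contains $Y$; minimal if no proper subset is a blocking set. $\beta(G)$ is the maximum size of a minimal blocking set of $G$; $\beta_{\mathcal{C}}=\sup_{G\in\mathcal{C}}\beta(G)$. Elimination distance: $\mathrm{ed}_{\mathcal{C}}(G)=0$ if $G\in\mathcal{C}$; otherwise if $G$ is connected, $\mathrm{ed}_{\mathcal{C}}(G)=1+\min_{v}\mathrm{ed}_{\mathcal{C}}(G-v)$; otherwise the maximum over connected components. $\beta_{\mathcal{C}}(d)=\max\{\beta(G):\mathrm{ed}_{\mathcal{C}}(G)\le d\}$. A class is robust if a graph is in it iff all its connected components are. *)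

theory Defs
  imports Main "HOL-Library.Extended_Nat"
begin

type_synonym graph = "nat set \<times> nat set set"

definition wf_graph :: "graph \<Rightarrow> bool" where
  "wf_graph G \<longleftrightarrow> finite (fst G) \<and>
     (\<forall>e\<in>snd G. \<exists>u v. e = {u, v} \<and> u \<noteq> v \<and> u \<in> fst G \<and> v \<in> fst G)"

definition vertex_cover :: "graph \<Rightarrow> nat set \<Rightarrow> bool" where
  "vertex_cover G S \<longleftrightarrow> S \<subseteq> fst G \<and> (\<forall>e\<in>snd G. e \<inter> S \<noteq> {})"

definition OPT :: "graph \<Rightarrow> nat" where
  "OPT G = (LEAST k. \<exists>S. vertex_cover G S \<and> card S = k)"

definition blocking_set :: "graph \<Rightarrow> nat set \<Rightarrow> bool" where
  "blocking_set G Y \<longleftrightarrow> Y \<subseteq> fst G \<and>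
     \<not> (\<exists>S. vertex_cover G S \<and> card S = OPT G \<and> Y \<subseteq> S)"

definition minimal_blocking_set :: "graph \<Rightarrow> nat set \<Rightarrow> bool" where
  "minimal_blocking_set G Y \<longleftrightarrow> blocking_set G Y \<and> (\<forall>Z. Z \<subset> Y \<longrightarrow> \<not> blocking_set G Z)"

text \<open>Maximum size of a minimal blocking set (0 if there is none, i.e. for the empty graph).\<close>
definition beta :: "graph \<Rightarrow> nat" where
  "beta G = Sup {card Y | Y. minimal_blocking_set G Y}"

definition betaC :: "graph set \<Rightarrow> enat" where
  "betaC C = Sup {enat (beta G) | G. wf_graph G \<and> G \<in> C}"

definition edge_rel :: "graph \<Rightarrow> (nat \<times> nat) set" where
  "edge_rel G = {(u, v). {u, v} \<in> snd G}"

definition connected_graph :: "graph \<Rightarrow> bool" where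
  "connected_graph G \<longleftrightarrow> (\<forall>u\<in>fst G. \<forall>v\<in>fst G. (u, v) \<in> (edge_rel G)\<^sup>*)"

definition induced :: "graph \<Rightarrow> nat set \<Rightarrow> graph" where
  "induced G W = (W, {e\<in>snd G. e \<subseteq> W})"

definition components :: "graph \<Rightarrow> graph set" where
  "components G = {induced G {v\<in>fst G. (u, v) \<in> (edge_rel G)\<^sup>*} | u. u \<in> fst G}"

definition delete_vertex :: "graph \<Rightarrow> nat \<Rightarrow> graph" where
  "delete_vertex G v = induced G (fst G - {v})"

definition isomorphic :: "graph \<Rightarrow> graph \<Rightarrow> bool" where
  "isomorphic G H \<longleftrightarrow> (\<exists>f. bij_betw f (fst G) (fst H) \<and> snd H = (\<lambda>e. f ` e) ` snd G)"

definition graph_class :: "graph set \<Rightarrow> bool" where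
  "graph_class C \<longleftrightarrow> (\<forall>G H. wf_graph G \<and> isomorphic G H \<longrightarrow> (G \<in> C \<longleftrightarrow> H \<in> C))"

definition robust :: "graph set \<Rightarrow> bool" where
  "robust C \<longleftrightarrow> (\<forall>G. wf_graph G \<longrightarrow> (G \<in> C \<longleftrightarrow> (\<forall>H\<in>components G. H \<in> C)))"

text \<open>ed_le C G k: the recursive definition of elimination distance, read as "ed_C(G) \<le> k".\<close>
inductive ed_le :: "graph set \<Rightarrow> graph \<Rightarrow> nat \<Rightarrow> bool" for C where
  in_class: "G \<in> C \<Longrightarrow> ed_le C G k"
| conn: "G \<notin> C \<Longrightarrow> connected_graph G \<Longrightarrow> v \<in> fst G \<Longrightarrow> ed_le C (delete_vertex G v) k
          \<Longrightarrow> ed_le C G (Suc k)"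
| disc: "G \<notin> C \<Longrightarrow> \<not> connected_graph G \<Longrightarrow> (\<forall>H\<in>components G. ed_le C H k) \<Longrightarrow> ed_le C G k"

definition ed :: "graph set \<Rightarrow> graph \<Rightarrow> enat" where
  "ed C G = Inf (enat ` {k. ed_le C G k})"

definition betaCd :: "graph set \<Rightarrow> nat \<Rightarrow> enat" where
  "betaCd C d = Sup {enat (beta G) | G. wf_graph G \<and> ed C G \<le> enat d}"

end

theory Submission
  imports Defs
begin


lemma wf_edge: "wf_graph G \<Longrightarrow> e \<in> snd G \<Longrightarrow> e \<subseteq> fst G"
  unfolding wf_graph_def by force

lemma wf_edge_ne: "wf_graph G \<Longrightarrow> e \<in> snd G \<Longrightarrow> e \<noteq> {}"
  unfolding wf_graph_def by force

lemma vc_finite: "wf_graph G \<Longrightarrow> vertex_cover G S \<Longrightarrow> finite S"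
  proof -
  assume "wf_graph G" "vertex_cover G S"
  hence "finite (fst G)" "S \<subseteq> fst G" unfolding wf_graph_def vertex_cover_def by simp_all
  thus ?thesis using finite_subset by metis
qed

lemma vc_V: "wf_graph G \<Longrightarrow> vertex_cover G (fst G)"
proof -
  assume wf: "wf_graph G"
  { fix e assume "e \<in> snd G"
    hence "e \<subseteq> fst G" "e \<noteq> {}" using wf wf_edge wf_edge_ne by auto
    hence "e \<inter> fst G \<noteq> {}" by auto }
  thus ?thesis unfolding vertex_cover_def by auto
qed

lemma OPT_le: "vertex_cover G S \<Longrightarrow> OPT G \<le> card S"
  unfolding OPT_def by (rule Least_le) blast

lemma OPT_ex: "wf_graph G \<Longrightarrow> \<exists>S. vertex_cover G S \<and> card S = OPT G"
  unfolding OPT_def by (rule LeastI_ex) (use vc_V in blast)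

lemma OPT_eqI: "(\<And>S. vertex_cover G S \<Longrightarrow> n \<le> card S) \<Longrightarrow> vertex_cover G S0 \<Longrightarrow> card S0 = n
   \<Longrightarrow> OPT G = n"
  unfolding OPT_def by (rule Least_equality) auto

lemma blocking_card: "blocking_set G Y \<Longrightarrow> vertex_cover G S \<Longrightarrow> Y \<subseteq> S \<Longrightarrow> OPT G + 1 \<le> card S"
  using OPT_le[of G S] unfolding blocking_set_def by force

lemma not_blocking: "minimal_blocking_set G Y \<Longrightarrow> x \<in> Y \<Longrightarrow>
   \<exists>S. vertex_cover G S \<and> card S = OPT G \<and> Y - {x} \<subseteq> S"
proof -
  assume m: "minimal_blocking_set G Y" and x: "x \<in> Y"
  hence "\<not> blocking_set G (Y - {x})" unfolding minimal_blocking_set_def by blast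
  moreover have "Y - {x} \<subseteq> fst G" using m unfolding minimal_blocking_set_def blocking_set_def by blast
  ultimately show ?thesis unfolding blocking_set_def by blast
qed

lemma minimalI: "blocking_set G Z \<Longrightarrow> (\<And>x. x \<in> Z \<Longrightarrow> \<exists>S. vertex_cover G S \<and> card S = OPT G \<and> Z - {x} \<subseteq> S)
  \<Longrightarrow> minimal_blocking_set G Z"
  unfolding minimal_blocking_set_def
proof (intro conjI allI impI)
  fix Z' assume b: "blocking_set G Z" and h: "\<And>x. x \<in> Z \<Longrightarrow> \<exists>S. vertex_cover G S \<and> card S = OPT G \<and> Z - {x} \<subseteq> S"
    and s: "Z' \<subset> Z"
  then obtain x where "x \<in> Z" "Z' \<subseteq> Z - {x}" by blast
  with h show "\<not> blocking_set G Z'" unfolding blocking_set_def by blast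
qed (simp)

lemma beta_ge: assumes "wf_graph G" "minimal_blocking_set G Y" shows "card Y \<le> beta G"
proof -
  have "{card Y | Y. minimal_blocking_set G Y} \<subseteq> card ` Pow (fst G)"
    unfolding minimal_blocking_set_def blocking_set_def by blast
  hence "finite {card Y | Y. minimal_blocking_set G Y}"
    proof (rule finite_subset)
    show "finite (card ` Pow (fst G))" using assms(1) unfolding wf_graph_def by simp
  qed
  thus ?thesis unfolding beta_def using assms(2)
    by (intro le_cSup_finite) auto
qed

lemma beta_attained: assumes "wf_graph G" "beta G \<ge> 1"
  shows "\<exists>Y. minimal_blocking_set G Y \<and> card Y = beta G"
proof -
  let ?X = "{card Y | Y. minimal_blocking_set G Y}"
  have "?X \<subseteq> card ` Pow (fst G)"
    unfolding minimal_blocking_set_def blocking_set_def by blast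
  hence f: "finite ?X"
    proof (rule finite_subset)
    show "finite (card ` Pow (fst G))" using assms(1) unfolding wf_graph_def by simp
  qed
  have ne: "?X \<noteq> {}" using assms(2) unfolding beta_def by (metis Sup_nat_empty not_one_le_zero)
  have "Sup ?X = Max ?X" by (rule cSup_eq_Max[OF f ne])
  moreover have "Max ?X \<in> ?X" by (rule Max_in[OF f ne])
  ultimately have "Sup ?X \<in> ?X" by (rule ssubst)
  then obtain Y where "minimal_blocking_set G Y" "card Y = Sup ?X" by (smt (verit) mem_Collect_eq)
  thus ?thesis unfolding beta_def by blast
qed



lemma wf_edgeE: "wf_graph G \<Longrightarrow> e \<in> snd G \<Longrightarrow> \<exists>u v. e = {u, v} \<and> u \<noteq> v \<and> u \<in> fst G \<and> v \<in> fst G"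
  unfolding wf_graph_def by simp

lemma wf_finite: "wf_graph G \<Longrightarrow> finite (fst G)"
  unfolding wf_graph_def by simp

lemma wf_graphI: "finite (fst G) \<Longrightarrow> (\<And>e. e \<in> snd G \<Longrightarrow> \<exists>u v. e = {u, v} \<and> u \<noteq> v \<and> u \<in> fst G \<and> v \<in> fst G)
  \<Longrightarrow> wf_graph G"
  unfolding wf_graph_def by simp

definition mapg :: "(nat \<Rightarrow> nat) \<Rightarrow> graph \<Rightarrow> graph" where
  "mapg f G = (f ` fst G, (\<lambda>e. f ` e) ` snd G)"

lemma mapg_fst[simp]: "fst (mapg f G) = f ` fst G" and mapg_snd[simp]: "snd (mapg f G) = (\<lambda>e. f ` e) ` snd G"
  unfolding mapg_def by simp_all

lemma mapg_comp: "mapg g (mapg f G) = mapg (g \<circ> f) G"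
  unfolding mapg_def by (simp add: image_comp)

lemma mapg_id: "mapg id G = G"
  unfolding mapg_def by simp

lemma wf_mapg: assumes "inj f" "wf_graph G" shows "wf_graph (mapg f G)"
proof (rule wf_graphI)
  show "finite (fst (mapg f G))" using wf_finite[OF assms(2)] by simp
next
  fix e' assume "e' \<in> snd (mapg f G)"
  then obtain e where e: "e \<in> snd G" "e' = f ` e" by auto
  then obtain u v where "e = {u, v}" "u \<noteq> v" "u \<in> fst G" "v \<in> fst G" using wf_edgeE[OF assms(2)] by blast
  hence "e' = {f u, f v} \<and> f u \<noteq> f v \<and> f u \<in> fst (mapg f G) \<and> f v \<in> fst (mapg f G)"
    using e assms(1) by (auto simp: inj_eq)
  thus "\<exists>u v. e' = {u, v} \<and> u \<noteq> v \<and> u \<in> fst (mapg f G) \<and> v \<in> fst (mapg f G)" by blast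
qed

lemma vc_map1: "vertex_cover G S \<Longrightarrow> vertex_cover (mapg f G) (f ` S)"
  unfolding vertex_cover_def by auto

lemma vc_map2: assumes "wf_graph G" "vertex_cover (mapg f G) S'"
  shows "vertex_cover G (f -` S' \<inter> fst G)" "f ` (f -` S' \<inter> fst G) = S'"
proof -
  show "f ` (f -` S' \<inter> fst G) = S'" using assms(2) unfolding vertex_cover_def by auto
  show "vertex_cover G (f -` S' \<inter> fst G)" unfolding vertex_cover_def
  proof (intro conjI ballI)
    fix e assume e: "e \<in> snd G"
    hence "f ` e \<inter> S' \<noteq> {}" using assms(2) unfolding vertex_cover_def by auto
    moreover have "e \<subseteq> fst G" using wf_edge[OF assms(1) e] .
    ultimately show "e \<inter> (f -` S' \<inter> fst G) \<noteq> {}" by auto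
  qed auto
qed

lemma OPT_map: assumes "inj f" "wf_graph G" shows "OPT (mapg f G) = OPT G"
proof -
  obtain S0 where S0: "vertex_cover G S0" "card S0 = OPT G" using OPT_ex[OF assms(2)] by blast
  show ?thesis
  proof (rule OPT_eqI)
    show "vertex_cover (mapg f G) (f ` S0)" using vc_map1[OF S0(1)] .
    show "card (f ` S0) = OPT G" using S0(2) card_image[OF inj_on_subset[OF assms(1)]] by simp
  next
    fix S' assume S': "vertex_cover (mapg f G) S'"
    let ?T = "f -` S' \<inter> fst G"
    have "OPT G \<le> card ?T" using OPT_le vc_map2(1)[OF assms(2) S'] by blast
    also have "card ?T = card S'"
      using vc_map2(2)[OF assms(2) S'] card_image[OF inj_on_subset[OF assms(1)], of ?T] by simp
    finally show "OPT G \<le> card S'" .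
  qed
qed

lemma mbs_map: assumes "inj f" "wf_graph G" "minimal_blocking_set G Y"
  shows "minimal_blocking_set (mapg f G) (f ` Y)"
proof (rule minimalI)
  have YV: "Y \<subseteq> fst G" using assms(3) unfolding minimal_blocking_set_def blocking_set_def by simp
  show "blocking_set (mapg f G) (f ` Y)" unfolding blocking_set_def
  proof (intro conjI notI)
    show "f ` Y \<subseteq> fst (mapg f G)" using YV by auto
    assume "\<exists>S. vertex_cover (mapg f G) S \<and> card S = OPT (mapg f G) \<and> f ` Y \<subseteq> S"
    then obtain S' where S': "vertex_cover (mapg f G) S'" "card S' = OPT (mapg f G)" "f ` Y \<subseteq> S'" by blast
    let ?T = "f -` S' \<inter> fst G"
    have "card ?T = card S'"
      using vc_map2(2)[OF assms(2) S'(1)] card_image[OF inj_on_subset[OF assms(1)], of ?T] by simp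
    hence "vertex_cover G ?T \<and> card ?T = OPT G \<and> Y \<subseteq> ?T"
      using vc_map2(1)[OF assms(2) S'(1)] S' YV OPT_map[OF assms(1,2)] by auto
    thus False using assms(3) unfolding minimal_blocking_set_def blocking_set_def by blast
  qed
next
  fix x assume "x \<in> f ` Y"
  then obtain y where y: "y \<in> Y" "x = f y" by blast
  obtain S where S: "vertex_cover G S" "card S = OPT G" "Y - {y} \<subseteq> S" using not_blocking[OF assms(3) y(1)] by blast
  have "card (f ` S) = OPT (mapg f G)"
    using S(2) card_image[OF inj_on_subset[OF assms(1)]] OPT_map[OF assms(1,2)] by simp
  moreover have "f ` Y - {x} \<subseteq> f ` S" using S(3) y assms(1) by (auto simp: inj_eq)
  ultimately show "\<exists>S. vertex_cover (mapg f G) S \<and> card S = OPT (mapg f G) \<and> f ` Y - {x} \<subseteq> S"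
    using vc_map1[OF S(1)] by blast
qed

lemma class_map: assumes "graph_class C" "inj f" "wf_graph G" shows "mapg f G \<in> C \<longleftrightarrow> G \<in> C"
proof -
  have "isomorphic G (mapg f G)" unfolding isomorphic_def
    using inj_on_subset[OF assms(2)] by (auto intro!: exI[of _ f] simp: bij_betw_def)
  thus ?thesis using assms(1,3) unfolding graph_class_def by blast
qed

lemma edge_rel_sym: "(u, v) \<in> edge_rel G \<Longrightarrow> (v, u) \<in> edge_rel G"
  unfolding edge_rel_def by (simp add: insert_commute)

lemma edge_rel_mono: "snd G \<subseteq> snd H \<Longrightarrow> edge_rel G \<subseteq> edge_rel H"
  unfolding edge_rel_def by auto

lemma rtrancl_edge_sym: "(u, v) \<in> (edge_rel G)\<^sup>* \<Longrightarrow> (v, u) \<in> (edge_rel G)\<^sup>*"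
proof -
  have "sym (edge_rel G)" by (rule symI) (rule edge_rel_sym)
  hence "sym ((edge_rel G)\<^sup>*)" by (rule sym_rtrancl)
  thus "(u, v) \<in> (edge_rel G)\<^sup>* \<Longrightarrow> (v, u) \<in> (edge_rel G)\<^sup>*" by (rule symD)
qed

lemma reach_map: "(u, v) \<in> (edge_rel G)\<^sup>* \<Longrightarrow> (f u, f v) \<in> (edge_rel (mapg f G))\<^sup>*"
proof (induction rule: rtrancl_induct)
  case (step a b)
  have "{a, b} \<in> snd G" using step(2) unfolding edge_rel_def by simp
  hence "f ` {a, b} \<in> snd (mapg f G)" unfolding mapg_snd by (rule imageI)
  hence "{f a, f b} \<in> snd (mapg f G)" by (simp only: image_insert image_empty)
  hence "(f a, f b) \<in> edge_rel (mapg f G)" unfolding edge_rel_def by simp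
  thus ?case using step(3) by (simp add: rtrancl_into_rtrancl)
qed simp

lemma connected_map: "connected_graph G \<Longrightarrow> connected_graph (mapg f G)"
  unfolding connected_graph_def
proof (intro ballI)
  fix x y assume c: "\<forall>u\<in>fst G. \<forall>v\<in>fst G. (u, v) \<in> (edge_rel G)\<^sup>*"
    and x: "x \<in> fst (mapg f G)" and y: "y \<in> fst (mapg f G)"
  then obtain u v where "u \<in> fst G" "v \<in> fst G" "x = f u" "y = f v" by auto
  thus "(x, y) \<in> (edge_rel (mapg f G))\<^sup>*" using c reach_map by blast
qed



definition join :: "graph \<Rightarrow> graph \<Rightarrow> nat \<Rightarrow> nat \<Rightarrow> nat set \<Rightarrow> graph" where
  "join G1 G2 w a B = (insert w (fst G1 \<union> fst G2), snd G1 \<union> snd G2 \<union> insert {w, a} ((\<lambda>b. {w, b}) ` B))"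

lemma join_fst[simp]: "fst (join G1 G2 w a B) = insert w (fst G1 \<union> fst G2)"
  and join_snd[simp]: "snd (join G1 G2 w a B) = snd G1 \<union> snd G2 \<union> insert {w, a} ((\<lambda>b. {w, b}) ` B)"
  unfolding join_def by simp_all

lemma map_join: "mapg g (join G1 G2 w a B) = join (mapg g G1) (mapg g G2) (g w) (g a) (g ` B)"
  unfolding mapg_def join_def by (simp add: image_Un image_image)

lemma wf_join: assumes "wf_graph G1" "wf_graph G2" "w \<notin> fst G1 \<union> fst G2" "a \<in> fst G1" "B \<subseteq> fst G2"
  shows "wf_graph (join G1 G2 w a B)"
proof (rule wf_graphI)
  show "finite (fst (join G1 G2 w a B))" using wf_finite[OF assms(1)] wf_finite[OF assms(2)] by simp
next
  fix e assume "e \<in> snd (join G1 G2 w a B)"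
  hence "e \<in> snd G1 \<or> e \<in> snd G2 \<or> e = {w, a} \<or> (\<exists>b\<in>B. e = {w, b})" by auto
  thus "\<exists>u v. e = {u, v} \<and> u \<noteq> v \<and> u \<in> fst (join G1 G2 w a B) \<and> v \<in> fst (join G1 G2 w a B)"
  proof (elim disjE)
    assume "e \<in> snd G1"
    then obtain u v where "e = {u, v}" "u \<noteq> v" "u \<in> fst G1" "v \<in> fst G1" using wf_edgeE[OF assms(1)] by blast
    thus ?thesis by auto
  next
    assume "e \<in> snd G2"
    then obtain u v where "e = {u, v}" "u \<noteq> v" "u \<in> fst G2" "v \<in> fst G2" using wf_edgeE[OF assms(2)] by blast
    thus ?thesis by auto
  next
    assume "e = {w, a}" thus ?thesis using assms(3,4) by auto
  next
    assume "\<exists>b\<in>B. e = {w, b}"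
    then obtain b where "b \<in> B" "e = {w, b}" by blast
    thus ?thesis using assms(3,5) by (intro exI[of _ w] exI[of _ b]) auto
  qed
qed

lemma join_edge_rel: "(u, v) \<in> edge_rel G \<Longrightarrow> (u, v) \<in> edge_rel (join G G2 w a B)"
  and join_edge_rel2: "(u, v) \<in> edge_rel G2 \<Longrightarrow> (u, v) \<in> edge_rel (join G G2 w a B)"
  unfolding edge_rel_def by auto

lemma connected_join:
  assumes "connected_graph G1" "connected_graph G2" "a \<in> fst G1" "fst G2 \<noteq> {} \<Longrightarrow> B \<inter> fst G2 \<noteq> {}"
  shows "connected_graph (join G1 G2 w a B)"
proof -
  let ?J = "join G1 G2 w a B"
  let ?R = "(edge_rel ?J)\<^sup>*"
  have wa: "(w, a) \<in> edge_rel ?J" unfolding edge_rel_def by simp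
  have m1: "edge_rel G1 \<subseteq> edge_rel ?J" by (rule edge_rel_mono) auto
  have m2: "edge_rel G2 \<subseteq> edge_rel ?J" by (rule edge_rel_mono) auto
  have toW: "(x, w) \<in> ?R" if x: "x \<in> fst ?J" for x
  proof -
    consider "x = w" | "x \<in> fst G1" | "x \<in> fst G2" using x by auto
    thus ?thesis
    proof cases
      case 2
      hence "(x, a) \<in> (edge_rel G1)\<^sup>*" using assms(1,3) unfolding connected_graph_def by blast
      hence "(x, a) \<in> ?R" using rtrancl_mono[OF m1] by blast
      moreover have "(a, w) \<in> edge_rel ?J" using edge_rel_sym[OF wa] .
      ultimately show ?thesis by (simp add: rtrancl_into_rtrancl)
    next
      case 3
      then obtain b where b: "b \<in> B" "b \<in> fst G2" using assms(4) by blast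
      hence "(x, b) \<in> (edge_rel G2)\<^sup>*" using assms(2) 3 unfolding connected_graph_def by blast
      hence "(x, b) \<in> ?R" using rtrancl_mono[OF m2] by blast
      moreover have "(b, w) \<in> edge_rel ?J" using b(1) unfolding edge_rel_def by (auto simp: insert_commute)
      ultimately show ?thesis by (simp add: rtrancl_into_rtrancl)
    qed simp
  qed
  show ?thesis unfolding connected_graph_def
  proof (intro ballI)
    fix u v assume u: "u \<in> fst ?J" and v: "v \<in> fst ?J"
    have "(u, w) \<in> ?R" using toW[OF u] .
    moreover have "(w, v) \<in> ?R" using rtrancl_edge_sym[OF toW[OF v]] .
    ultimately show "(u, v) \<in> ?R" by (rule rtrancl_trans)
  qed
qed

lemma delete_join: assumes "wf_graph G1" "wf_graph G2" "w \<notin> fst G1 \<union> fst G2"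
  shows "delete_vertex (join G1 G2 w a B) w = (fst G1 \<union> fst G2, snd G1 \<union> snd G2)"
proof -
  have "fst (join G1 G2 w a B) - {w} = fst G1 \<union> fst G2" using assms(3) by auto
  moreover have "{e \<in> snd (join G1 G2 w a B). e \<subseteq> fst G1 \<union> fst G2} = snd G1 \<union> snd G2"
  proof (rule set_eqI, rule iffI)
    fix e assume "e \<in> {e \<in> snd (join G1 G2 w a B). e \<subseteq> fst G1 \<union> fst G2}"
    thus "e \<in> snd G1 \<union> snd G2" using assms(3) by auto
  next
    fix e assume "e \<in> snd G1 \<union> snd G2"
    thus "e \<in> {e \<in> snd (join G1 G2 w a B). e \<subseteq> fst G1 \<union> fst G2}"
      using wf_edge[OF assms(1)] wf_edge[OF assms(2)] by auto
  qed
  ultimately show ?thesis unfolding delete_vertex_def induced_def by simp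
qed

lemma stay: assumes "wf_graph G1" "wf_graph G2" "fst G1 \<inter> fst G2 = {}"
  and "(u, x) \<in> (edge_rel (fst G1 \<union> fst G2, snd G1 \<union> snd G2))\<^sup>*" "u \<in> fst G1"
  shows "x \<in> fst G1"
  using assms(4,5)
proof (induction rule: rtrancl_induct)
  case (step a b)
  have "{a, b} \<in> snd G1 \<or> {a, b} \<in> snd G2" using step(2) unfolding edge_rel_def by simp
  moreover have "a \<in> fst G1" using step by simp
  ultimately show ?case using wf_edge[OF assms(1), of "{a,b}"] wf_edge[OF assms(2), of "{a,b}"] assms(3) by auto
qed simp

lemma comp_U: assumes "wf_graph G1" "wf_graph G2" "fst G1 \<inter> fst G2 = {}" "connected_graph G1" "u \<in> fst G1"
  shows "induced (fst G1 \<union> fst G2, snd G1 \<union> snd G2)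
     {v \<in> fst (fst G1 \<union> fst G2, snd G1 \<union> snd G2). (u, v) \<in> (edge_rel (fst G1 \<union> fst G2, snd G1 \<union> snd G2))\<^sup>*} = G1"
proof -
  let ?U = "(fst G1 \<union> fst G2, snd G1 \<union> snd G2)"
  have "{v \<in> fst ?U. (u, v) \<in> (edge_rel ?U)\<^sup>*} = fst G1"
  proof (rule set_eqI, rule iffI)
    fix v assume "v \<in> {v \<in> fst ?U. (u, v) \<in> (edge_rel ?U)\<^sup>*}"
    thus "v \<in> fst G1" using stay[OF assms(1-3) _ assms(5)] by simp
  next
    fix v assume v: "v \<in> fst G1"
    have "(u, v) \<in> (edge_rel G1)\<^sup>*" using assms(4,5) v unfolding connected_graph_def by blast
    moreover have "edge_rel G1 \<subseteq> edge_rel ?U" by (rule edge_rel_mono) simp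
    ultimately have "(u, v) \<in> (edge_rel ?U)\<^sup>*" using rtrancl_mono by blast
    thus "v \<in> {v \<in> fst ?U. (u, v) \<in> (edge_rel ?U)\<^sup>*}" using v by simp
  qed
  moreover have "{e \<in> snd ?U. e \<subseteq> fst G1} = snd G1"
  proof (rule set_eqI, rule iffI)
    fix e assume e: "e \<in> {e \<in> snd ?U. e \<subseteq> fst G1}"
    show "e \<in> snd G1"
    proof (rule ccontr)
      assume "e \<notin> snd G1"
      hence "e \<in> snd G2" using e by simp
      hence "e \<subseteq> fst G2" "e \<noteq> {}" using wf_edge[OF assms(2)] wf_edge_ne[OF assms(2)] by auto
      thus False using e assms(3) by auto
    qed
  next
    fix e assume "e \<in> snd G1"
    thus "e \<in> {e \<in> snd ?U. e \<subseteq> fst G1}" using wf_edge[OF assms(1)] by simp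
  qed
  ultimately show ?thesis unfolding induced_def by simp
qed

lemma ed_join:
  assumes "wf_graph G1" "wf_graph G2" "connected_graph G1" "connected_graph G2"
    "fst G2 \<noteq> {}" "fst G1 \<inter> fst G2 = {}" "w \<notin> fst G1 \<union> fst G2" "a \<in> fst G1"
    "B \<subseteq> fst G2" "B \<noteq> {}" "ed_le C G1 k" "ed_le C G2 k"
  shows "ed_le C (join G1 G2 w a B) (Suc k)"
proof (cases "join G1 G2 w a B \<in> C")
  case True thus ?thesis by (rule ed_le.in_class)
next
  case False
  let ?U = "(fst G1 \<union> fst G2, snd G1 \<union> snd G2)"
  have cj: "connected_graph (join G1 G2 w a B)"
    by (rule connected_join[OF assms(3,4,8)]) (use assms(9,10) in blast)
  have "ed_le C ?U k"
  proof (cases "?U \<in> C")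
    case True thus ?thesis by (rule ed_le.in_class)
  next
    case F2: False
    have nc: "\<not> connected_graph ?U"
    proof
      assume c: "connected_graph ?U"
      obtain b where b: "b \<in> fst G2" using assms(5) by blast
      have "(a, b) \<in> (edge_rel ?U)\<^sup>*" using c b assms(8) unfolding connected_graph_def by simp
      hence "b \<in> fst G1" using stay[OF assms(1,2,6) _ assms(8)] by simp
      thus False using b assms(6) by blast
    qed
    have "\<forall>H\<in>components ?U. ed_le C H k"
    proof
      fix H assume "H \<in> components ?U"
      then obtain u where u: "u \<in> fst ?U" "H = induced ?U {v \<in> fst ?U. (u, v) \<in> (edge_rel ?U)\<^sup>*}"
        unfolding components_def by blast
      show "ed_le C H k"
      proof (cases "u \<in> fst G1")
        case True
        hence "H = G1" using comp_U[OF assms(1,2,6,3) True] u(2) by simp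
        thus ?thesis using assms(11) by simp
      next
        case False
        hence u2: "u \<in> fst G2" using u(1) by simp
        have e1: "?U = (fst G2 \<union> fst G1, snd G2 \<union> snd G1)" by (simp add: Un_commute)
        have "H = G2" using comp_U[OF assms(2,1) _ assms(4) u2] u(2) assms(6) e1 by (simp add: Int_commute)
        thus ?thesis using assms(12) by simp
      qed
    qed
    thus ?thesis using ed_le.disc[OF F2 nc] by simp
  qed
  hence "ed_le C (delete_vertex (join G1 G2 w a B) w) k" using delete_join[OF assms(1,2,7)] by simp
  thus ?thesis using ed_le.conn[OF False cj, of w k] by simp
qed

lemma ed_pend:
  assumes "wf_graph G" "connected_graph G" "w \<notin> fst G" "a \<in> fst G" "ed_le C G k"
  shows "ed_le C (join G ({}, {}) w a {}) (Suc k)"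
proof (cases "join G ({}, {}) w a {} \<in> C")
  case True thus ?thesis by (rule ed_le.in_class)
next
  case False
  have wf0: "wf_graph ({}, {})" by (rule wf_graphI) auto
  have c0: "connected_graph ({}, {})" unfolding connected_graph_def by simp
  have cj: "connected_graph (join G ({}, {}) w a {})"
    by (rule connected_join[OF assms(2) c0 assms(4)]) simp
  have "delete_vertex (join G ({}, {}) w a {}) w = G" using delete_join[OF assms(1) wf0, of w a "{}"] assms(3) by simp
  thus ?thesis using ed_le.conn[OF False cj, of w k] assms(5) by simp
qed



lemma vc_join_split: assumes "wf_graph G1" "wf_graph G2" "vertex_cover (join G1 G2 w a B) S"
  shows "vertex_cover G1 (S \<inter> fst G1)" "vertex_cover G2 (S \<inter> fst G2)" "w \<notin> S \<Longrightarrow> a \<in> S"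
    "w \<notin> S \<Longrightarrow> B \<subseteq> S"
proof -
  have cov: "\<And>e. e \<in> snd (join G1 G2 w a B) \<Longrightarrow> e \<inter> S \<noteq> {}" using assms(3) unfolding vertex_cover_def by blast
  show "vertex_cover G1 (S \<inter> fst G1)" unfolding vertex_cover_def
  proof (intro conjI ballI)
    fix e assume e: "e \<in> snd G1"
    hence "e \<inter> S \<noteq> {}" using cov by simp
    thus "e \<inter> (S \<inter> fst G1) \<noteq> {}" using wf_edge[OF assms(1) e] by blast
  qed simp
  show "vertex_cover G2 (S \<inter> fst G2)" unfolding vertex_cover_def
  proof (intro conjI ballI)
    fix e assume e: "e \<in> snd G2"
    hence "e \<inter> S \<noteq> {}" using cov by simp
    thus "e \<inter> (S \<inter> fst G2) \<noteq> {}" using wf_edge[OF assms(2) e] by blast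
  qed simp
  show "w \<notin> S \<Longrightarrow> a \<in> S" using cov[of "{w, a}"] by auto
  show "w \<notin> S \<Longrightarrow> B \<subseteq> S"
  proof
    fix b assume "w \<notin> S" "b \<in> B"
    thus "b \<in> S" using cov[of "{w, b}"] by auto
  qed
qed

lemma vc_join_mk1: assumes "vertex_cover G1 S1" "vertex_cover G2 S2"
  shows "vertex_cover (join G1 G2 w a B) (insert w (S1 \<union> S2))"
  using assms unfolding vertex_cover_def by auto

lemma vc_join_mk2: assumes "vertex_cover G1 S1" "vertex_cover G2 S2" "a \<in> S1" "B \<subseteq> S2"
  shows "vertex_cover (join G1 G2 w a B) (S1 \<union> S2)"
  using assms unfolding vertex_cover_def by auto

lemma card_join: assumes "finite S" "S \<subseteq> insert w (V1 \<union> V2)" "V1 \<inter> V2 = {}" "w \<notin> V1 \<union> V2"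
  shows "card S = card (S \<inter> V1) + card (S \<inter> V2) + (if w \<in> S then 1 else 0)"
proof -
  have e: "S - {w} = (S \<inter> V1) \<union> (S \<inter> V2)" using assms(2,4) by auto
  have f1: "finite (S \<inter> V1)" "finite (S \<inter> V2)" using assms(1) by simp_all
  have d: "(S \<inter> V1) \<inter> (S \<inter> V2) = {}" using assms(3) by blast
  have "card (S - {w}) = card (S \<inter> V1) + card (S \<inter> V2)"
    unfolding e by (rule card_Un_disjoint[OF f1 d])
  moreover have "card S = card (S - {w}) + (if w \<in> S then 1 else 0)"
  proof (cases "w \<in> S")
    case True
    hence "card S = Suc (card (S - {w}))" by (rule card.remove[OF assms(1)])
    thus ?thesis using True by simp
  qed simp
  ultimately show ?thesis by simp
qed

lemma vc_sub: "vertex_cover G S \<Longrightarrow> S \<subseteq> fst G"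
  unfolding vertex_cover_def by simp

lemma mbs_blocking: "minimal_blocking_set G Y \<Longrightarrow> blocking_set G Y"
  unfolding minimal_blocking_set_def by simp

lemma mbs_sub: "minimal_blocking_set G Y \<Longrightarrow> Y \<subseteq> fst G"
  unfolding minimal_blocking_set_def blocking_set_def by simp

lemma mbs_join:
  assumes wf1: "wf_graph G1" and wf2: "wf_graph G2" and disj: "fst G1 \<inter> fst G2 = {}"
    and w: "w \<notin> fst G1 \<union> fst G2"
    and m1: "minimal_blocking_set G1 Y1" and y: "y \<in> Y1"
    and m2: "minimal_blocking_set G2 Y2" and ne: "Y2 \<noteq> {}"
  shows "minimal_blocking_set (join G1 G2 w y Y2) ((Y1 - {y}) \<union> Y2)"
proof -
  let ?J = "join G1 G2 w y Y2"
  let ?o1 = "OPT G1" and ?o2 = "OPT G2"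
  have wfJ: "wf_graph ?J" by (rule wf_join[OF wf1 wf2 w]) (use y mbs_sub[OF m1] mbs_sub[OF m2] in auto)
  have Y1V: "Y1 \<subseteq> fst G1" and Y2V: "Y2 \<subseteq> fst G2" using mbs_sub[OF m1] mbs_sub[OF m2] .
  have b1: "blocking_set G1 Y1" and b2: "blocking_set G2 Y2" using mbs_blocking m1 m2 by auto
  have cardS: "card S = card (S \<inter> fst G1) + card (S \<inter> fst G2) + (if w \<in> S then 1 else 0)"
    if "vertex_cover ?J S" for S
    by (rule card_join[OF vc_finite[OF wfJ that] _ disj w]) (use vc_sub[OF that] in simp)
  have low1: "?o1 \<le> card (S \<inter> fst G1)" "?o2 \<le> card (S \<inter> fst G2)" if "vertex_cover ?J S" for S
    using OPT_le vc_join_split[OF wf1 wf2 that] by auto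
  obtain S1 where S1: "vertex_cover G1 S1" "card S1 = ?o1" "Y1 - {y} \<subseteq> S1" using not_blocking[OF m1 y] by blast
  obtain b where b: "b \<in> Y2" using ne by blast
  obtain S2 where S2: "vertex_cover G2 S2" "card S2 = ?o2" "Y2 - {b} \<subseteq> S2" using not_blocking[OF m2 b] by blast
  have cardI: "card (insert w (T1 \<union> T2)) = card T1 + card T2 + 1"
    if "vertex_cover G1 T1" "vertex_cover G2 T2" for T1 T2
  proof -
    have "T1 \<subseteq> fst G1" "T2 \<subseteq> fst G2" using vc_sub that by auto
    moreover have "finite T1" "finite T2" using vc_finite wf1 wf2 that by auto
    moreover have "T1 \<inter> T2 = {}" using calculation(1,2) disj by auto
    ultimately have "card (T1 \<union> T2) = card T1 + card T2" by (simp add: card_Un_disjoint)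
    moreover have "w \<notin> T1 \<union> T2" using \<open>T1 \<subseteq> fst G1\<close> \<open>T2 \<subseteq> fst G2\<close> w by auto
    ultimately show ?thesis using \<open>finite T1\<close> \<open>finite T2\<close> by simp
  qed
  have OPTJ: "OPT ?J = ?o1 + ?o2 + 1"
  proof (rule OPT_eqI)
    show "vertex_cover ?J (insert w (S1 \<union> S2))" by (rule vc_join_mk1[OF S1(1) S2(1)])
    show "card (insert w (S1 \<union> S2)) = ?o1 + ?o2 + 1" using cardI[OF S1(1) S2(1)] S1(2) S2(2) by simp
  next
    fix S assume S: "vertex_cover ?J S"
    show "?o1 + ?o2 + 1 \<le> card S"
    proof (cases "w \<in> S")
      case True thus ?thesis using cardS[OF S] low1[OF S] by simp
    next
      case False
      hence "Y2 \<subseteq> S \<inter> fst G2" using vc_join_split(4)[OF wf1 wf2 S] Y2V by auto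
      hence "?o2 + 1 \<le> card (S \<inter> fst G2)" using blocking_card[OF b2 vc_join_split(2)[OF wf1 wf2 S]] by simp
      thus ?thesis using cardS[OF S] low1[OF S] by simp
    qed
  qed
  show ?thesis
  proof (rule minimalI)
    show "blocking_set ?J ((Y1 - {y}) \<union> Y2)" unfolding blocking_set_def
    proof (intro conjI notI)
      show "(Y1 - {y}) \<union> Y2 \<subseteq> fst ?J" using Y1V Y2V by auto
      assume "\<exists>S. vertex_cover ?J S \<and> card S = OPT ?J \<and> (Y1 - {y}) \<union> Y2 \<subseteq> S"
      then obtain S where S: "vertex_cover ?J S" "card S = OPT ?J" "(Y1 - {y}) \<union> Y2 \<subseteq> S" by blast
      have "Y2 \<subseteq> S \<inter> fst G2" using S(3) Y2V by auto
      hence c2: "?o2 + 1 \<le> card (S \<inter> fst G2)" using blocking_card[OF b2 vc_join_split(2)[OF wf1 wf2 S(1)]] by simp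
      show False
      proof (cases "w \<in> S")
        case True thus False using cardS[OF S(1)] low1[OF S(1)] c2 S(2) OPTJ by simp
      next
        case False
        hence "y \<in> S" using vc_join_split(3)[OF wf1 wf2 S(1)] by simp
        hence "Y1 \<subseteq> S \<inter> fst G1" using S(3) Y1V by auto
        hence "?o1 + 1 \<le> card (S \<inter> fst G1)" using blocking_card[OF b1 vc_join_split(1)[OF wf1 wf2 S(1)]] by simp
        thus False using cardS[OF S(1)] c2 S(2) OPTJ False by simp
      qed
    qed
  next
    fix x assume x: "x \<in> (Y1 - {y}) \<union> Y2"
    show "\<exists>S. vertex_cover ?J S \<and> card S = OPT ?J \<and> (Y1 - {y}) \<union> Y2 - {x} \<subseteq> S"
    proof (cases "x \<in> Y2")
      case True
      obtain S2' where S2': "vertex_cover G2 S2'" "card S2' = ?o2" "Y2 - {x} \<subseteq> S2'" using not_blocking[OF m2 True] by blast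
      have "vertex_cover ?J (insert w (S1 \<union> S2'))" by (rule vc_join_mk1[OF S1(1) S2'(1)])
      moreover have "card (insert w (S1 \<union> S2')) = OPT ?J" using cardI[OF S1(1) S2'(1)] S1(2) S2'(2) OPTJ by simp
      moreover have "(Y1 - {y}) \<union> Y2 - {x} \<subseteq> insert w (S1 \<union> S2')" using S1(3) S2'(3) by auto
      ultimately show ?thesis by blast
    next
      case False
      hence x1: "x \<in> Y1" "x \<noteq> y" using x by auto
      obtain S1' where S1': "vertex_cover G1 S1'" "card S1' = ?o1" "Y1 - {x} \<subseteq> S1'" using not_blocking[OF m1 x1(1)] by blast
      have yS: "y \<in> S1'" using S1'(3) y x1(2) by auto
      have bV: "b \<in> fst G2" using b Y2V by auto
      have T2: "vertex_cover G2 (insert b S2)" using S2(1) bV unfolding vertex_cover_def by auto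
      have Y2T: "Y2 \<subseteq> insert b S2" using S2(3) by auto
      have vc: "vertex_cover ?J (S1' \<union> insert b S2)" by (rule vc_join_mk2[OF S1'(1) T2 yS Y2T])
      have "card (S1' \<union> insert b S2) \<le> card S1' + card (insert b S2)" by (rule card_Un_le)
      also have "\<dots> \<le> ?o1 + (?o2 + 1)" using S1'(2) S2(2) vc_finite[OF wf2 S2(1)]
        by (simp add: card_insert_if)
      finally have "card (S1' \<union> insert b S2) \<le> OPT ?J" using OPTJ by simp
      moreover have "OPT ?J \<le> card (S1' \<union> insert b S2)" using OPT_le[OF vc] .
      moreover have "(Y1 - {y}) \<union> Y2 - {x} \<subseteq> S1' \<union> insert b S2" using S1'(3) Y2T by auto
      ultimately show ?thesis using vc by (intro exI[of _ "S1' \<union> insert b S2"]) simp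
    qed
  qed
qed



lemma wf0: "wf_graph ({}, {})" by (rule wf_graphI) auto

lemma mbs_pend:
  assumes wf1: "wf_graph G" and w: "w \<notin> fst G" and m: "minimal_blocking_set G {a}"
  shows "minimal_blocking_set (join G ({}, {}) w a {}) {w, a}"
proof -
  let ?J = "join G ({}, {}) w a {}"
  let ?o = "OPT G"
  have aV: "a \<in> fst G" using mbs_sub[OF m] by simp
  have wfJ: "wf_graph ?J" by (rule wf_join[OF wf1 wf0]) (use w aV in auto)
  have b: "blocking_set G {a}" using mbs_blocking[OF m] .
  have cardS: "card S = card (S \<inter> fst G) + (if w \<in> S then 1 else 0)"
    if "vertex_cover ?J S" for S
  proof -
    have "card S = card (S \<inter> fst G) + card (S \<inter> {}) + (if w \<in> S then 1 else 0)"
      by (rule card_join[OF vc_finite[OF wfJ that]]) (use vc_sub[OF that] w in auto)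
    thus ?thesis by simp
  qed
  have low: "?o \<le> card (S \<inter> fst G)" if "vertex_cover ?J S" for S
    using OPT_le vc_join_split(1)[OF wf1 wf0 that] by auto
  obtain S0 where S0: "vertex_cover G S0" "card S0 = ?o" using OPT_ex[OF wf1] by blast
  have fS0: "finite S0" using vc_finite[OF wf1 S0(1)] .
  have S0V: "S0 \<subseteq> fst G" using vc_sub[OF S0(1)] .
  have vc0: "vertex_cover ({}, {}) {}" unfolding vertex_cover_def by simp
  have vcw: "vertex_cover ?J (insert w S0)" using vc_join_mk1[OF S0(1) vc0, of w a "{}"] by simp
  have "w \<notin> S0" using S0V w by auto
  hence cw: "card (insert w S0) = ?o + 1" using S0(2) fS0 by simp
  have OPTJ: "OPT ?J = ?o + 1"
  proof (rule OPT_eqI[OF _ vcw cw])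
    fix S assume S: "vertex_cover ?J S"
    show "?o + 1 \<le> card S"
    proof (cases "w \<in> S")
      case True thus ?thesis using cardS[OF S] low[OF S] by simp
    next
      case False
      hence "{a} \<subseteq> S \<inter> fst G" using vc_join_split(3)[OF wf1 wf0 S] aV by auto
      hence "?o + 1 \<le> card (S \<inter> fst G)" using blocking_card[OF b vc_join_split(1)[OF wf1 wf0 S]] by simp
      thus ?thesis using cardS[OF S] by simp
    qed
  qed
  show ?thesis
  proof (rule minimalI)
    show "blocking_set ?J {w, a}" unfolding blocking_set_def
    proof (intro conjI notI)
      show "{w, a} \<subseteq> fst ?J" using aV by auto
      assume "\<exists>S. vertex_cover ?J S \<and> card S = OPT ?J \<and> {w, a} \<subseteq> S"
      then obtain S where S: "vertex_cover ?J S" "card S = OPT ?J" "{w, a} \<subseteq> S" by blast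
      hence "{a} \<subseteq> S \<inter> fst G" using aV by auto
      hence "?o + 1 \<le> card (S \<inter> fst G)" using blocking_card[OF b vc_join_split(1)[OF wf1 wf0 S(1)]] by simp
      thus False using cardS[OF S(1)] S(2,3) OPTJ by simp
    qed
  next
    fix x assume x: "x \<in> {w, a}"
    show "\<exists>S. vertex_cover ?J S \<and> card S = OPT ?J \<and> {w, a} - {x} \<subseteq> S"
    proof (cases "x = w")
      case True
      have T: "vertex_cover G (insert a S0)" using S0(1) aV unfolding vertex_cover_def by auto
      have vc: "vertex_cover ?J (insert a S0 \<union> {})" by (rule vc_join_mk2[OF T vc0]) auto
      have "card (insert a S0) \<le> ?o + 1" using S0(2) fS0 by (simp add: card_insert_if)
      hence "card (insert a S0) = OPT ?J" using OPT_le[OF vc] OPTJ by simp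
      thus ?thesis using vc True by (intro exI[of _ "insert a S0"]) auto
    next
      case False
      hence "x = a" using x by simp
      thus ?thesis using vcw cw OPTJ by (intro exI[of _ "insert w S0"]) auto
    qed
  qed
qed



lemma wf_induced: assumes "wf_graph G" "W \<subseteq> fst G" shows "wf_graph (induced G W)"
proof (rule wf_graphI)
  show "finite (fst (induced G W))" using wf_finite[OF assms(1)] assms(2) unfolding induced_def
    by (simp add: finite_subset)
next
  fix e assume "e \<in> snd (induced G W)"
  hence e: "e \<in> snd G" "e \<subseteq> W" unfolding induced_def by simp_all
  then obtain u v where "e = {u, v}" "u \<noteq> v" using wf_edgeE[OF assms(1)] by blast
  thus "\<exists>u v. e = {u, v} \<and> u \<noteq> v \<and> u \<in> fst (induced G W) \<and> v \<in> fst (induced G W)"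
    using e(2) unfolding induced_def by auto
qed

lemma comp_extract:
  assumes rob: "robust C" and GC: "G \<in> C" and wf: "wf_graph G" and m: "minimal_blocking_set G Y" and y: "y \<in> Y"
  shows "\<exists>K. wf_graph K \<and> connected_graph K \<and> K \<in> C \<and> minimal_blocking_set K Y"
proof -
  define R where "R = edge_rel G"
  define W where "W = {v \<in> fst G. (y, v) \<in> R\<^sup>*}"
  define K where "K = induced G W"
  define L where "L = induced G (fst G - W)"
  have YV: "Y \<subseteq> fst G" using mbs_sub[OF m] .
  have yV: "y \<in> fst G" using YV y by blast
  have yW: "y \<in> W" unfolding W_def using yV by simp
  have WV: "W \<subseteq> fst G" unfolding W_def by blast
  have "K \<in> components G" unfolding components_def K_def W_def R_def using yV by blast
  hence KC: "K \<in> C" using rob wf GC unfolding robust_def by blast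
  have wfK: "wf_graph K" unfolding K_def by (rule wf_induced[OF wf WV])
  have wfL: "wf_graph L" unfolding L_def by (rule wf_induced[OF wf]) blast
  have cross: "e \<subseteq> W \<or> e \<subseteq> fst G - W" if e: "e \<in> snd G" for e
  proof -
    obtain p q where pq: "e = {p, q}" "p \<in> fst G" "q \<in> fst G" using wf_edgeE[OF wf e] by blast
    have "(p, q) \<in> R" "(q, p) \<in> R" using e pq(1) unfolding R_def edge_rel_def by (simp_all add: insert_commute)
    hence "p \<in> W \<longleftrightarrow> q \<in> W" unfolding W_def using pq(2,3)
      by (auto intro: rtrancl_into_rtrancl)
    thus ?thesis using pq by auto
  qed
  have reachK: "(y, u) \<in> (edge_rel K)\<^sup>*" if "(y, u) \<in> R\<^sup>*" for u
    using that
  proof (induction rule: rtrancl_induct)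
    case (step a b)
    have ab: "{a, b} \<in> snd G" using step(2) unfolding R_def edge_rel_def by simp
    hence "{a, b} \<subseteq> fst G" by (rule wf_edge[OF wf])
    moreover have "(y, b) \<in> R\<^sup>*" using step(1,2) by (rule rtrancl_into_rtrancl)
    ultimately have "{a, b} \<subseteq> W" unfolding W_def using step(1) by auto
    hence "(a, b) \<in> edge_rel K" using ab unfolding K_def induced_def edge_rel_def by simp
    thus ?case using step(3) by (simp add: rtrancl_into_rtrancl)
  qed simp
  have conK: "connected_graph K" unfolding connected_graph_def
  proof (intro ballI)
    fix u v assume "u \<in> fst K" "v \<in> fst K"
    hence "(y, u) \<in> R\<^sup>*" "(y, v) \<in> R\<^sup>*" unfolding K_def induced_def W_def by auto
    hence "(u, y) \<in> (edge_rel K)\<^sup>*" "(y, v) \<in> (edge_rel K)\<^sup>*" using reachK rtrancl_edge_sym by blast+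
    thus "(u, v) \<in> (edge_rel K)\<^sup>*" by (rule rtrancl_trans)
  qed
  have splitK: "vertex_cover K (S \<inter> W)" if S: "vertex_cover G S" for S
    unfolding vertex_cover_def
  proof (intro conjI ballI)
    show "S \<inter> W \<subseteq> fst K" unfolding K_def induced_def by simp
    fix e assume "e \<in> snd K"
    hence "e \<in> snd G" "e \<subseteq> W" unfolding K_def induced_def by simp_all
    thus "e \<inter> (S \<inter> W) \<noteq> {}" using S unfolding vertex_cover_def by blast
  qed
  have splitL: "vertex_cover L (S - W)" if S: "vertex_cover G S" for S
    unfolding vertex_cover_def
  proof (intro conjI ballI)
    show "S - W \<subseteq> fst L" using vc_sub[OF S] unfolding L_def induced_def by auto
    fix e assume "e \<in> snd L"
    hence "e \<in> snd G" "e \<subseteq> fst G - W" unfolding L_def induced_def by simp_all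
    thus "e \<inter> (S - W) \<noteq> {}" using S unfolding vertex_cover_def by blast
  qed
  have mk: "vertex_cover G (SK \<union> SL)" if "vertex_cover K SK" "vertex_cover L SL" for SK SL
    unfolding vertex_cover_def
  proof (intro conjI ballI)
    show "SK \<union> SL \<subseteq> fst G" using vc_sub[OF that(1)] vc_sub[OF that(2)] WV
      unfolding K_def L_def induced_def by auto
    fix e assume e: "e \<in> snd G"
    show "e \<inter> (SK \<union> SL) \<noteq> {}"
    proof (cases "e \<subseteq> W")
      case True
      hence "e \<in> snd K" using e unfolding K_def induced_def by simp
      thus ?thesis using that(1) unfolding vertex_cover_def by blast
    next
      case False
      hence "e \<in> snd L" using e cross[OF e] unfolding L_def induced_def by simp
      thus ?thesis using that(2) unfolding vertex_cover_def by blast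
    qed
  qed
  have cardsplit: "card S = card (S \<inter> W) + card (S - W)" if "vertex_cover G S" for S
  proof -
    have f: "finite S" using vc_finite[OF wf that] .
    have "S = (S \<inter> W) \<union> (S - W)" by blast
    hence "card S = card ((S \<inter> W) \<union> (S - W))" by simp
    also have "\<dots> = card (S \<inter> W) + card (S - W)" by (rule card_Un_disjoint) (use f in auto)
    finally show ?thesis .
  qed
  obtain SK where SK: "vertex_cover K SK" "card SK = OPT K" using OPT_ex[OF wfK] by blast
  obtain SL where SL: "vertex_cover L SL" "card SL = OPT L" using OPT_ex[OF wfL] by blast
  have SKW: "SK \<subseteq> W" using vc_sub[OF SK(1)] unfolding K_def induced_def by simp
  have SLW: "SL \<inter> W = {}" using vc_sub[OF SL(1)] unfolding L_def induced_def by auto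
  have OPTG: "OPT G = OPT K + OPT L"
  proof (rule OPT_eqI)
    show "vertex_cover G (SK \<union> SL)" by (rule mk[OF SK(1) SL(1)])
    have "finite SK" "finite SL" using vc_finite wfK wfL SK(1) SL(1) by auto
    moreover have "SK \<inter> SL = {}" using SKW SLW by blast
    ultimately show "card (SK \<union> SL) = OPT K + OPT L" using SK(2) SL(2) by (simp add: card_Un_disjoint)
  next
    fix S assume S: "vertex_cover G S"
    show "OPT K + OPT L \<le> card S" using cardsplit[OF S] OPT_le[OF splitK[OF S]] OPT_le[OF splitL[OF S]] by simp
  qed
  have minK: "card (S \<inter> W) = OPT K" if "vertex_cover G S" "card S = OPT G" for S
    using cardsplit[OF that(1)] OPT_le[OF splitK[OF that(1)]] OPT_le[OF splitL[OF that(1)]] that(2) OPTG by simp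
  have minL: "card (S - W) = OPT L" if "vertex_cover G S" "card S = OPT G" for S
    using cardsplit[OF that(1)] OPT_le[OF splitK[OF that(1)]] OPT_le[OF splitL[OF that(1)]] that(2) OPTG by simp
  have bG: "blocking_set G Y" using mbs_blocking[OF m] .
  have either: "blocking_set K (Y \<inter> W) \<or> blocking_set L (Y - W)"
  proof (rule ccontr)
    assume "\<not> ?thesis"
    hence n1: "\<not> blocking_set K (Y \<inter> W)" and n2: "\<not> blocking_set L (Y - W)" by auto
    have "Y \<inter> W \<subseteq> fst K" unfolding K_def induced_def by simp
    then obtain TK where TK: "vertex_cover K TK" "card TK = OPT K" "Y \<inter> W \<subseteq> TK"
      using n1 unfolding blocking_set_def by blast
    have "Y - W \<subseteq> fst L" using YV unfolding L_def induced_def by auto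
    then obtain TL where TL: "vertex_cover L TL" "card TL = OPT L" "Y - W \<subseteq> TL"
      using n2 unfolding blocking_set_def by blast
    have TKW: "TK \<subseteq> W" using vc_sub[OF TK(1)] unfolding K_def induced_def by simp
    have TLW: "TL \<inter> W = {}" using vc_sub[OF TL(1)] unfolding L_def induced_def by auto
    have vc: "vertex_cover G (TK \<union> TL)" by (rule mk[OF TK(1) TL(1)])
    have "finite TK" "finite TL" using vc_finite wfK wfL TK(1) TL(1) by auto
    moreover have "TK \<inter> TL = {}" using TKW TLW by blast
    ultimately have "card (TK \<union> TL) = OPT G" using TK(2) TL(2) OPTG by (simp add: card_Un_disjoint)
    moreover have "Y \<subseteq> TK \<union> TL" using TK(3) TL(3) by blast
    ultimately show False using bG vc unfolding blocking_set_def by blast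
  qed
  have YW: "Y \<subseteq> W"
  proof (cases "blocking_set K (Y \<inter> W)")
    case True
    have "blocking_set G (Y \<inter> W)" unfolding blocking_set_def
    proof (intro conjI notI)
      show "Y \<inter> W \<subseteq> fst G" using YV by blast
      assume "\<exists>S. vertex_cover G S \<and> card S = OPT G \<and> Y \<inter> W \<subseteq> S"
      then obtain S where S: "vertex_cover G S" "card S = OPT G" "Y \<inter> W \<subseteq> S" by blast
      have "vertex_cover K (S \<inter> W) \<and> card (S \<inter> W) = OPT K \<and> Y \<inter> W \<subseteq> S \<inter> W"
        using splitK[OF S(1)] minK[OF S(1,2)] S(3) by blast
      thus False using True unfolding blocking_set_def by blast
    qed
    hence "\<not> (Y \<inter> W \<subset> Y)" using m unfolding minimal_blocking_set_def by blast
    thus ?thesis by blast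
  next
    case False
    hence bL: "blocking_set L (Y - W)" using either by blast
    have "blocking_set G (Y - W)" unfolding blocking_set_def
    proof (intro conjI notI)
      show "Y - W \<subseteq> fst G" using YV by blast
      assume "\<exists>S. vertex_cover G S \<and> card S = OPT G \<and> Y - W \<subseteq> S"
      then obtain S where S: "vertex_cover G S" "card S = OPT G" "Y - W \<subseteq> S" by blast
      have "vertex_cover L (S - W) \<and> card (S - W) = OPT L \<and> Y - W \<subseteq> S - W"
        using splitL[OF S(1)] minL[OF S(1,2)] S(3) by blast
      thus False using bL unfolding blocking_set_def by blast
    qed
    moreover have "Y - W \<subset> Y" using y yW by blast
    ultimately show ?thesis using m unfolding minimal_blocking_set_def by blast
  qed
  have mK: "minimal_blocking_set K Y"
  proof (rule minimalI)
    show "blocking_set K Y" unfolding blocking_set_def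
    proof (intro conjI notI)
      show "Y \<subseteq> fst K" using YW unfolding K_def induced_def by simp
      assume "\<exists>S. vertex_cover K S \<and> card S = OPT K \<and> Y \<subseteq> S"
      then obtain S where S: "vertex_cover K S" "card S = OPT K" "Y \<subseteq> S" by blast
      have SW: "S \<inter> SL = {}" using vc_sub[OF S(1)] SLW unfolding K_def induced_def by auto
      have vc: "vertex_cover G (S \<union> SL)" by (rule mk[OF S(1) SL(1)])
      have "finite S" "finite SL" using vc_finite wfK wfL S(1) SL(1) by auto
      hence "card (S \<union> SL) = OPT G" using SW S(2) SL(2) OPTG by (simp add: card_Un_disjoint)
      moreover have "Y \<subseteq> S \<union> SL" using S(3) by blast
      ultimately show False using bG vc unfolding blocking_set_def by blast
    qed
  next
    fix x assume x: "x \<in> Y"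
    obtain S where S: "vertex_cover G S" "card S = OPT G" "Y - {x} \<subseteq> S" using not_blocking[OF m x] by blast
    have "vertex_cover K (S \<inter> W) \<and> card (S \<inter> W) = OPT K \<and> Y - {x} \<subseteq> S \<inter> W"
      using splitK[OF S(1)] minK[OF S(1,2)] S(3) YW by blast
    thus "\<exists>S. vertex_cover K S \<and> card S = OPT K \<and> Y - {x} \<subseteq> S" by blast
  qed
  show ?thesis using wfK conK KC mK by blast
qed



definition PP :: "graph set \<Rightarrow> nat \<Rightarrow> nat \<Rightarrow> bool" where
  "PP C d m \<longleftrightarrow> (\<exists>G Y. wf_graph G \<and> connected_graph G \<and> minimal_blocking_set G Y \<and> card Y = m \<and>
      (\<forall>f. inj f \<longrightarrow> ed_le C (mapg f G) d))"

lemma PP_base: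
  assumes gc: "graph_class C" and rob: "robust C" and GC: "G \<in> C" and wf: "wf_graph G"
    and m: "minimal_blocking_set G Y" and c: "card Y = k" and k: "k \<ge> 1"
  shows "PP C 0 k"
proof -
  obtain y where y: "y \<in> Y" using c k by (metis card.empty ex_in_conv not_one_le_zero)
  obtain K where K: "wf_graph K" "connected_graph K" "K \<in> C" "minimal_blocking_set K Y"
    using comp_extract[OF rob GC wf m y] by blast
  have "\<forall>f. inj f \<longrightarrow> ed_le C (mapg f K) 0"
  proof (intro allI impI)
    fix f :: "nat \<Rightarrow> nat" assume "inj f"
    hence "mapg f K \<in> C" using class_map[OF gc _ K(1)] K(3) by blast
    thus "ed_le C (mapg f K) 0" by (rule ed_le.in_class)
  qed
  thus ?thesis unfolding PP_def using K c by blast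
qed

lemma PP_double:
  assumes "PP C d m" "m \<ge> 1"
  shows "PP C (Suc d) (2 * m - 1)"
proof -
  obtain G Y where G: "wf_graph G" "connected_graph G" "minimal_blocking_set G Y" "card Y = m"
    "\<forall>f. inj f \<longrightarrow> ed_le C (mapg f G) d" using assms(1) unfolding PP_def by blast
  have Yne: "Y \<noteq> {}" using G(4) assms(2) by auto
  then obtain y where y: "y \<in> Y" by blast
  have fY: "finite Y" using G(4) assms(2) by (intro card_ge_0_finite) simp
  have YV: "Y \<subseteq> fst G" using mbs_sub[OF G(3)] .
  define f1 where "f1 = (\<lambda>n::nat. 2 * n + 1)"
  define f2 where "f2 = (\<lambda>n::nat. 2 * n + 2)"
  have i1: "inj f1" unfolding f1_def inj_def by simp
  have i2: "inj f2" unfolding f2_def inj_def by simp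
  have d12: "f1 a \<noteq> f2 b" for a b unfolding f1_def f2_def by presburger
  have n1: "f1 a \<noteq> 0" and n2: "f2 a \<noteq> 0" for a unfolding f1_def f2_def by simp_all
  have JJ: "\<And>g. mapg g (join (mapg f1 G) (mapg f2 G) 0 (f1 y) (f2 ` Y))
      = join (mapg (g \<circ> f1) G) (mapg (g \<circ> f2) G) (g 0) ((g \<circ> f1) y) ((g \<circ> f2) ` Y)"
    by (simp add: map_join mapg_comp image_comp)
  have key: "wf_graph (join (mapg (g \<circ> f1) G) (mapg (g \<circ> f2) G) (g 0) ((g \<circ> f1) y) ((g \<circ> f2) ` Y))
    \<and> connected_graph (join (mapg (g \<circ> f1) G) (mapg (g \<circ> f2) G) (g 0) ((g \<circ> f1) y) ((g \<circ> f2) ` Y))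
    \<and> ed_le C (join (mapg (g \<circ> f1) G) (mapg (g \<circ> f2) G) (g 0) ((g \<circ> f1) y) ((g \<circ> f2) ` Y)) (Suc d)"
    if g: "inj g" for g
  proof -
    have ig1: "inj (g \<circ> f1)" and ig2: "inj (g \<circ> f2)" using inj_compose g i1 i2 by blast+
    have wf1: "wf_graph (mapg (g \<circ> f1) G)" by (rule wf_mapg[OF ig1 G(1)])
    have wf2: "wf_graph (mapg (g \<circ> f2) G)" by (rule wf_mapg[OF ig2 G(1)])
    have c1: "connected_graph (mapg (g \<circ> f1) G)" and c2: "connected_graph (mapg (g \<circ> f2) G)"
      using connected_map[OF G(2)] by blast+
    have disj: "fst (mapg (g \<circ> f1) G) \<inter> fst (mapg (g \<circ> f2) G) = {}"
      using d12 g by (auto simp: inj_eq)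
    have w: "g 0 \<notin> fst (mapg (g \<circ> f1) G) \<union> fst (mapg (g \<circ> f2) G)"
    proof
      assume "g 0 \<in> fst (mapg (g \<circ> f1) G) \<union> fst (mapg (g \<circ> f2) G)"
      then obtain x where "g 0 = g (f1 x) \<or> g 0 = g (f2 x)" by auto
      hence "0 = f1 x \<or> 0 = f2 x" using g by (simp add: inj_eq)
      thus False using n1[of x] n2[of x] by auto
    qed
    have a: "(g \<circ> f1) y \<in> fst (mapg (g \<circ> f1) G)" using y YV by auto
    have B: "(g \<circ> f2) ` Y \<subseteq> fst (mapg (g \<circ> f2) G)" using YV by auto
    have Bne: "(g \<circ> f2) ` Y \<noteq> {}" using Yne by simp
    have ne2: "fst (mapg (g \<circ> f2) G) \<noteq> {}" using Yne YV by auto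
    show ?thesis
    proof (intro conjI)
      show "wf_graph (join (mapg (g \<circ> f1) G) (mapg (g \<circ> f2) G) (g 0) ((g \<circ> f1) y) ((g \<circ> f2) ` Y))"
        by (rule wf_join[OF wf1 wf2 w a B])
      show "connected_graph (join (mapg (g \<circ> f1) G) (mapg (g \<circ> f2) G) (g 0) ((g \<circ> f1) y) ((g \<circ> f2) ` Y))"
        by (rule connected_join[OF c1 c2 a]) (use B Bne in blast)
      show "ed_le C (join (mapg (g \<circ> f1) G) (mapg (g \<circ> f2) G) (g 0) ((g \<circ> f1) y) ((g \<circ> f2) ` Y)) (Suc d)"
        by (rule ed_join[OF wf1 wf2 c1 c2 ne2 disj w a B Bne]) (use G(5) ig1 ig2 in blast)+
    qed
  qed
  let ?J = "join (mapg f1 G) (mapg f2 G) 0 (f1 y) (f2 ` Y)"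
  have k0: "wf_graph ?J" "connected_graph ?J" using key[OF inj_on_id] by simp_all
  have edJ: "\<forall>g. inj g \<longrightarrow> ed_le C (mapg g ?J) (Suc d)"
  proof (intro allI impI)
    fix g :: "nat \<Rightarrow> nat" assume "inj g"
    thus "ed_le C (mapg g ?J) (Suc d)" unfolding JJ using key by blast
  qed
  have wf1: "wf_graph (mapg f1 G)" and wf2: "wf_graph (mapg f2 G)" using wf_mapg i1 i2 G(1) by blast+
  have disj: "fst (mapg f1 G) \<inter> fst (mapg f2 G) = {}" using d12 by auto
  have w: "0 \<notin> fst (mapg f1 G) \<union> fst (mapg f2 G)" unfolding f1_def f2_def by auto
  have m1: "minimal_blocking_set (mapg f1 G) (f1 ` Y)" by (rule mbs_map[OF i1 G(1,3)])
  have m2: "minimal_blocking_set (mapg f2 G) (f2 ` Y)" by (rule mbs_map[OF i2 G(1,3)])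
  have mJ: "minimal_blocking_set ?J ((f1 ` Y - {f1 y}) \<union> f2 ` Y)"
    by (rule mbs_join[OF wf1 wf2 disj w m1 _ m2]) (use y Yne in auto)
  have ca: "card (f1 ` Y - {f1 y}) = m - 1" using card_image[OF inj_on_subset[OF i1]] G(4) y fY
    by (simp add: card_Diff_singleton)
  have cb: "card (f2 ` Y) = m" using card_image[OF inj_on_subset[OF i2]] G(4) by simp
  have "card ((f1 ` Y - {f1 y}) \<union> f2 ` Y) = card (f1 ` Y - {f1 y}) + card (f2 ` Y)"
  proof (rule card_Un_disjoint)
    show "finite (f1 ` Y - {f1 y})" "finite (f2 ` Y)" using fY by simp_all
    have "f1 ` Y \<inter> f2 ` Y = {}" using d12 by auto
    thus "(f1 ` Y - {f1 y}) \<inter> f2 ` Y = {}" by blast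
  qed
  hence "card ((f1 ` Y - {f1 y}) \<union> f2 ` Y) = 2 * m - 1" using ca cb assms(2) by simp
  thus ?thesis unfolding PP_def using k0 mJ edJ by blast
qed

lemma PP_pend:
  assumes "PP C 0 1"
  shows "PP C 1 2"
proof -
  obtain G Y where G: "wf_graph G" "connected_graph G" "minimal_blocking_set G Y" "card Y = 1"
    "\<forall>f. inj f \<longrightarrow> ed_le C (mapg f G) 0" using assms(1) unfolding PP_def by blast
  obtain a where Ya: "Y = {a}" using G(4) card_1_singletonE by blast
  have aV: "a \<in> fst G" using mbs_sub[OF G(3)] Ya by simp
  define f1 where "f1 = (\<lambda>n::nat. n + 1)"
  have i1: "inj f1" unfolding f1_def inj_def by simp
  have n1: "f1 x \<noteq> 0" for x unfolding f1_def by simp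
  have JJ: "\<And>g. mapg g (join (mapg f1 G) ({}, {}) 0 (f1 a) {})
      = join (mapg (g \<circ> f1) G) ({}, {}) (g 0) ((g \<circ> f1) a) {}"
    by (simp add: map_join mapg_comp) (simp add: mapg_def)
  have key: "wf_graph (join (mapg (g \<circ> f1) G) ({}, {}) (g 0) ((g \<circ> f1) a) {})
    \<and> connected_graph (join (mapg (g \<circ> f1) G) ({}, {}) (g 0) ((g \<circ> f1) a) {})
    \<and> ed_le C (join (mapg (g \<circ> f1) G) ({}, {}) (g 0) ((g \<circ> f1) a) {}) (Suc 0)"
    if g: "inj g" for g
  proof -
    have ig1: "inj (g \<circ> f1)" using inj_compose g i1 by blast
    have wf1: "wf_graph (mapg (g \<circ> f1) G)" by (rule wf_mapg[OF ig1 G(1)])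
    have c1: "connected_graph (mapg (g \<circ> f1) G)" using connected_map[OF G(2)] by blast
    have c0: "connected_graph ({}, {})" unfolding connected_graph_def by simp
    have w: "g 0 \<notin> fst (mapg (g \<circ> f1) G)"
    proof
      assume "g 0 \<in> fst (mapg (g \<circ> f1) G)"
      then obtain x where "g 0 = g (f1 x)" by auto
      hence "0 = f1 x" using g by (simp add: inj_eq)
      thus False using n1[of x] by simp
    qed
    have a: "(g \<circ> f1) a \<in> fst (mapg (g \<circ> f1) G)" using aV by auto
    show ?thesis
    proof (intro conjI)
      show "wf_graph (join (mapg (g \<circ> f1) G) ({}, {}) (g 0) ((g \<circ> f1) a) {})"
        by (rule wf_join[OF wf1 wf0]) (use w a in auto)
      show "connected_graph (join (mapg (g \<circ> f1) G) ({}, {}) (g 0) ((g \<circ> f1) a) {})"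
        by (rule connected_join[OF c1 c0 a]) simp
      show "ed_le C (join (mapg (g \<circ> f1) G) ({}, {}) (g 0) ((g \<circ> f1) a) {}) (Suc 0)"
        by (rule ed_pend[OF wf1 c1 w a]) (use G(5) ig1 in blast)
    qed
  qed
  let ?J = "join (mapg f1 G) ({}, {}) 0 (f1 a) {}"
  have k0: "wf_graph ?J" "connected_graph ?J" using key[OF inj_on_id] by simp_all
  have edJ: "\<forall>g. inj g \<longrightarrow> ed_le C (mapg g ?J) 1"
  proof (intro allI impI)
    fix g :: "nat \<Rightarrow> nat" assume "inj g"
    thus "ed_le C (mapg g ?J) 1" unfolding JJ using key by simp
  qed
  have wf1: "wf_graph (mapg f1 G)" using wf_mapg i1 G(1) by blast
  have m1: "minimal_blocking_set (mapg f1 G) {f1 a}" using mbs_map[OF i1 G(1,3)] Ya by simp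
  have mJ: "minimal_blocking_set ?J {0, f1 a}"
    by (rule mbs_pend[OF wf1 _ m1]) (auto simp: f1_def)
  have "card {0, f1 a} = 2" using n1[of a] by simp
  thus ?thesis unfolding PP_def using k0 mJ edJ by blast
qed

lemma PP_iter: assumes "PP C d m" "m \<ge> 1" shows "PP C (d + n) ((m - 1) * 2 ^ n + 1)"
proof (induction n)
  case 0 thus ?case using assms by simp
next
  case (Suc n)
  have "PP C (Suc (d + n)) (2 * ((m - 1) * 2 ^ n + 1) - 1)" by (rule PP_double[OF Suc]) simp
  moreover have eq: "2 * ((m - 1) * 2 ^ n + 1) - 1 = (m - 1) * 2 ^ Suc n + 1" by simp
  ultimately have "PP C (Suc (d + n)) ((m - 1) * 2 ^ Suc n + 1)" by (simp only:)
  thus ?case by (simp only: add_Suc_right)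
qed

lemma PP_bound: assumes "PP C d m" shows "enat m \<le> betaCd C d"
proof -
  obtain G Y where G: "wf_graph G" "minimal_blocking_set G Y" "card Y = m"
    "\<forall>f. inj f \<longrightarrow> ed_le C (mapg f G) d" using assms unfolding PP_def by blast
  have "ed_le C (mapg id G) d" using G(4) by simp
  hence "ed_le C G d" by (simp add: mapg_id)
  hence "ed C G \<le> enat d" unfolding ed_def by (intro Inf_lower) simp
  hence "enat (beta G) \<in> {enat (beta G) | G. wf_graph G \<and> ed C G \<le> enat d}" using G(1) by blast
  hence "enat (beta G) \<le> betaCd C d" unfolding betaCd_def by (rule Sup_upper)
  moreover have "m \<le> beta G" using beta_ge[OF G(1,2)] G(3) by simp
  ultimately show ?thesis by (meson enat_ord_simps(1) order_trans)
qed

lemma enat_Sup_ne: assumes "Sup (A::enat set) = enat b" "b \<ge> 1" shows "A \<noteq> {}" "finite A"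
proof -
  show ne: "A \<noteq> {}"
  proof
    assume "A = {}" hence "Sup A = 0" by (simp add: Sup_enat_def)
    thus False using assms by (simp add: zero_enat_def)
  qed
  show "finite A"
  proof (rule ccontr)
    assume "\<not> finite A" hence "Sup A = \<infinity>" unfolding Sup_enat_def using ne by simp
    thus False using assms by simp
  qed
qed

lemma enat_Sup_max: "A \<noteq> {} \<Longrightarrow> finite A \<Longrightarrow> Sup (A::enat set) = Max A"
  by (simp add: Sup_enat_def)

lemma betaC_attained: assumes "betaC C = enat b" "b \<ge> 1"
  shows "\<exists>G. wf_graph G \<and> G \<in> C \<and> beta G = b"
proof -
  let ?A = "{enat (beta G) | G. wf_graph G \<and> G \<in> C}"
  have S: "Sup ?A = enat b" using assms(1) unfolding betaC_def .
  have ne: "?A \<noteq> {}" and fin: "finite ?A" using enat_Sup_ne[OF S assms(2)] by auto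
  have "Sup ?A = Max ?A" by (rule enat_Sup_max[OF ne fin])
  moreover have "Max ?A \<in> ?A" by (rule Max_in[OF fin ne])
  ultimately have "enat b \<in> ?A" using S by simp
  thus ?thesis by auto
qed

theorem mainTheorem5:
  fixes C :: "graph set" and d :: nat
  assumes "graph_class C" and "robust C" and "betaC C \<noteq> \<infinity>" and "d \<ge> 1"
  shows "(betaC C = 1 \<longrightarrow> betaCd C d \<ge> enat (2 ^ (d - 1) + 1)) \<and>
         (betaC C \<ge> 2 \<longrightarrow> betaCd C d \<ge> (betaC C - 1) * enat (2 ^ d) + 1)"
proof -
  obtain b where b: "betaC C = enat b" using assms(3) by (cases "betaC C") auto
  have base: "PP C 0 b" if b1: "b \<ge> 1"
  proof -
    obtain G where G: "wf_graph G" "G \<in> C" "beta G = b" using betaC_attained[OF b b1] by blast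
    obtain Y where Y: "minimal_blocking_set G Y" "card Y = beta G" using beta_attained[OF G(1)] G(3) b1 by auto
    show ?thesis by (rule PP_base[OF assms(1,2) G(2,1) Y(1)]) (use Y(2) G(3) b1 in auto)
  qed
  show ?thesis
  proof (intro conjI impI)
    assume "betaC C = 1"
    hence b1: "b = 1" using b by (simp add: one_enat_def)
    have "PP C 1 2" by (rule PP_pend) (use base b1 in simp)
    hence "PP C (1 + (d - 1)) ((2 - 1) * 2 ^ (d - 1) + 1)" by (rule PP_iter) simp
    hence "PP C d (2 ^ (d - 1) + 1)" using assms(4) by simp
    thus "betaCd C d \<ge> enat (2 ^ (d - 1) + 1)" by (rule PP_bound)
  next
    assume "betaC C \<ge> 2"
    hence b2: "b \<ge> 2" using b by (simp add: numeral_eq_enat)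
    have "PP C (0 + d) ((b - 1) * 2 ^ d + 1)" by (rule PP_iter[OF base]) (use b2 in simp_all)
    hence "enat ((b - 1) * 2 ^ d + 1) \<le> betaCd C d" using PP_bound by simp
    moreover have "(betaC C - 1) * enat (2 ^ d) + 1 = enat ((b - 1) * 2 ^ d + 1)"
      using b by (simp add: one_enat_def)
    ultimately show "betaCd C d \<ge> (betaC C - 1) * enat (2 ^ d) + 1" by simp
  qed
qed

end
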